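(* Let $\mathbb F$ be algebraically closed of characteristic $0$, let $V$ be a vector space over $\mathbb F$ of finite positive dimension, and let $A,A^*$ be a TD pair on $V$ of Krawtchouk type. Let $\dagger$ be the antiautomorphism of $\mathrm{End}(V)$ defined by $\langle Xu,v\rangle=\langle u,X^\dagger v\rangle$ for all $X\in\mathrm{End}(V)$, $u,v\in V$, where $\langle\,,\rangle$ is a nonzero bilinear form on $V$ satisfying $\langle Au,v\rangle=\langle u,Av\rangle$ and $\langle A^*u,v\rangle=\langle u,A^*v\rangle$ for all $u,v$ (such a form exists, is nondegenerate, and is unique up to a nonzero scalar, so $\dagger$ is well defined). Then $\dagger$ is the unique antiautomorphism of $\mathrm{End}(V)$ that fixes each of $A,A^*$. Moreover $X^{\dagger\dagger}=X$ for all $X\in\mathrm{End}(V)$.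
   Context: An antiautomorphism of $\mathrm{End}(V)$ is an $\mathbb F$-linear bijection $\varrho:\mathrm{End}(V)\to\mathrm{End}(V)$ with $(XY)^\varrho=Y^\varrho X^\varrho$. A TD pair on a finite-dimensional $\mathbb F$-vector space $V$ is an ordered pair $A,A^*$ of diagonalizable linear maps on $V$ such that for some ordering $V_0,\dots,V_d$ of the eigenspaces of $A$ one has $A^*V_i\subseteq V_{i-1}+V_i+V_{i+1}$ ($0\le i\le d$), for some ordering $V^*_0,\dots,V^*_\delta$ of the eigenspaces of $A^*$ one has $AV^*_i\subseteq V^*_{i-1}+V^*_i+V^*_{i+1}$ ($0\le i\le\delta$) (terms with out-of-range index are $0$), and no subspace $W\neq 0,V$ satisfies $AW\subseteq W$, $A^*W\subseteq W$. Such orderings are called standard; an ordering of eigenvalues is standard if the corresponding ordering of eigenspaces is. It is known that $d=\delta$ (the diameter). The TD pair has Krawtchouk type if the sequence $(d-2i)_{i=0}^d$ is a standard ordering of the eigenvalues of $A$ and also a standard ordering of the eigenvalues of $A^*$. *)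

theory Defs
  imports "HOL-Analysis.Analysis" "HOL-Computational_Algebra.Polynomial"
begin

text \<open>V is modelled as the coordinate space 'f^'n ('n a nonempty finite type, so
  dim V = CARD('n) > 0); End(V) is modelled as the n x n matrices 'f^'n^'n
  acting by (*v), with composition (**).\<close>

definition alg_closed :: "'a::field itself \<Rightarrow> bool" where
  "alg_closed _ \<longleftrightarrow> (\<forall>p::'a poly. degree p \<ge> 1 \<longrightarrow> (\<exists>x. poly p x = 0))"

definition eigenspace :: "'f::field^'n^'n \<Rightarrow> 'f \<Rightarrow> ('f^'n) set" where
  "eigenspace A \<theta> = {v. A *v v = \<theta> *s v}"

definition is_eigenvalue :: "'f::field^'n^'n \<Rightarrow> 'f \<Rightarrow> bool" where
  "is_eigenvalue A \<theta> \<longleftrightarrow> eigenspace A \<theta> \<noteq> {0}"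

definition diagonalizable :: "'f::field^'n^'n \<Rightarrow> bool" where
  "diagonalizable A \<longleftrightarrow> vec.span (\<Union>\<theta>\<in>{\<theta>. is_eigenvalue A \<theta>}. eigenspace A \<theta>) = UNIV"

text \<open>Eigenspace number j of the ordering th_0..th_d; zero for out-of-range j.\<close>
definition ES :: "'f::field^'n^'n \<Rightarrow> (nat \<Rightarrow> 'f) \<Rightarrow> nat \<Rightarrow> int \<Rightarrow> ('f^'n) set" where
  "ES A th d j = (if 0 \<le> j \<and> j \<le> int d then eigenspace A (th (nat j)) else {0})"

definition standard_ordering ::
    "'f::field^'n^'n \<Rightarrow> 'f^'n^'n \<Rightarrow> (nat \<Rightarrow> 'f) \<Rightarrow> nat \<Rightarrow> bool" where
  "standard_ordering A B th d \<longleftrightarrow>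
     inj_on th {0..d} \<and>
     th ` {0..d} = {\<theta>. is_eigenvalue A \<theta>} \<and>
     (\<forall>i\<le>d. \<forall>v\<in>eigenspace A (th i).
        B *v v \<in> {x + y + z | x y z.
           x \<in> ES A th d (int i - 1) \<and> y \<in> ES A th d (int i) \<and> z \<in> ES A th d (int i + 1)})"

definition TD_pair :: "'f::field^'n^'n \<Rightarrow> 'f^'n^'n \<Rightarrow> bool" where
  "TD_pair A B \<longleftrightarrow>
     diagonalizable A \<and> diagonalizable B \<and>
     (\<exists>th d. standard_ordering A B th d) \<and>
     (\<exists>th d. standard_ordering B A th d) \<and>
     (\<forall>W. vec.subspace W \<and> W \<noteq> {0} \<and> W \<noteq> UNIV \<longrightarrow>
        \<not> ((\<forall>w\<in>W. A *v w \<in> W) \<and> (\<forall>w\<in>W. B *v w \<in> W)))"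

definition krawtchouk_type :: "'f::field^'n^'n \<Rightarrow> 'f^'n^'n \<Rightarrow> bool" where
  "krawtchouk_type A B \<longleftrightarrow>
     (\<exists>d. standard_ordering A B (\<lambda>i. of_nat d - 2 * of_nat i) d \<and>
          standard_ordering B A (\<lambda>i. of_nat d - 2 * of_nat i) d)"

definition mscale :: "'f::field \<Rightarrow> 'f^'n^'n \<Rightarrow> 'f^'n^'n" where
  "mscale c X = (\<chi> i j. c * X $ i $ j)"

definition antiautomorphism :: "('f::field^'n^'n \<Rightarrow> 'f^'n^'n) \<Rightarrow> bool" where
  "antiautomorphism f \<longleftrightarrow>
     (\<forall>X Y. f (X + Y) = f X + f Y) \<and> (\<forall>c X. f (mscale c X) = mscale c (f X)) \<and>
     bij f \<and> (\<forall>X Y. f (X ** Y) = f Y ** f X)"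

definition bilinear_form :: "('f::field^'n \<Rightarrow> 'f^'n \<Rightarrow> 'f) \<Rightarrow> bool" where
  "bilinear_form b \<longleftrightarrow>
     (\<forall>x y z. b (x + y) z = b x z + b y z) \<and> (\<forall>c x z. b (c *s x) z = c * b x z) \<and>
     (\<forall>x y z. b x (y + z) = b x y + b x z) \<and> (\<forall>c x z. b x (c *s z) = c * b x z)"

end

theory Submission
  imports Defs
begin


lemma mscale_mv: "mscale c X *v v = c *s (X *v v)"
  by (simp add: mscale_def matrix_vector_mult_def vec_eq_iff sum_distrib_left mult.assoc)

lemma mv_scale: "(X::'f::field^'n^'m) *v (c *s v) = c *s (X *v v)"
  by (simp add: matrix_vector_mult_def vec_eq_iff sum_distrib_left mult.left_commute)

lemma mscale_mult_left: "mscale c X ** Y = mscale c (X ** Y)"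
  by (simp add: mscale_def matrix_matrix_mult_def vec_eq_iff sum_distrib_left mult.assoc)

lemma mscale_mult_right: "(X::'f::field^'n^'n) ** mscale c Y = mscale c (X ** Y)"
  by (simp add: mscale_def matrix_matrix_mult_def vec_eq_iff sum_distrib_left mult.left_commute)

inductive_set gen :: "'f::field^'n^'n \<Rightarrow> 'f^'n^'n \<Rightarrow> ('f^'n^'n) set" for A B where
  gA: "A \<in> gen A B"
| gB: "B \<in> gen A B"
| g1: "mat 1 \<in> gen A B"
| gadd: "X \<in> gen A B \<Longrightarrow> Y \<in> gen A B \<Longrightarrow> X + Y \<in> gen A B"
| gmul: "X \<in> gen A B \<Longrightarrow> Y \<in> gen A B \<Longrightarrow> X ** Y \<in> gen A B"
| gsc: "X \<in> gen A B \<Longrightarrow> mscale c X \<in> gen A B"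

lemma mscale_0: "mscale 0 X = 0"
  by (simp add: mscale_def vec_eq_iff)

lemma g0: "0 \<in> gen A B"
  using gsc[OF g1, where c=0] by (simp add: mscale_0)

lemma mscale_m1: "mscale (-1) X = - X"
  by (simp add: mscale_def vec_eq_iff)

lemma gdiff: "X \<in> gen A B \<Longrightarrow> Y \<in> gen A B \<Longrightarrow> X - Y \<in> gen A B"
  using gadd[OF _ gsc[where X=Y and c="-1"]] by (simp add: mscale_m1)

lemma gsum: "finite S \<Longrightarrow> (\<And>i. i \<in> S \<Longrightarrow> f i \<in> gen A B) \<Longrightarrow> sum f S \<in> gen A B"
  by (induction S rule: finite_induct) (auto intro: g0 gadd)

definition irred :: "'f::field^'n^'n \<Rightarrow> 'f^'n^'n \<Rightarrow> bool" where
  "irred A B \<longleftrightarrow> (\<forall>W. vec.subspace W \<and> W \<noteq> {0} \<and> W \<noteq> UNIV \<longrightarrow>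
        \<not> ((\<forall>w\<in>W. A *v w \<in> W) \<and> (\<forall>w\<in>W. B *v w \<in> W)))"

lemma irredD:
  assumes "irred A B" "vec.subspace W" "\<forall>w\<in>W. A *v w \<in> W" "\<forall>w\<in>W. B *v w \<in> W"
  shows "W = {0} \<or> W = UNIV"
  using assms unfolding irred_def by blast

lemma step1:
  fixes A B :: "'f::field^'n^'n"
  assumes "irred A B" "x \<noteq> 0"
  shows "\<exists>X\<in>gen A B. X *v x = y"
proof -
  let ?W = "{X *v x | X. X \<in> gen A B}"
  have sub: "vec.subspace ?W"
    unfolding vec.subspace_def
  proof (intro conjI ballI allI)
    show "0 \<in> ?W" using g0[of A B] by force
    fix u v assume "u \<in> ?W" "v \<in> ?W"
    then obtain X Y where "X \<in> gen A B" "Y \<in> gen A B" "u = X *v x" "v = Y *v x" by blast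
    then show "u + v \<in> ?W"
      by (metis (mono_tags, lifting) gadd matrix_vector_mult_add_rdistrib mem_Collect_eq)
  next
    fix c u assume "u \<in> ?W"
    then obtain X where "X \<in> gen A B" "u = X *v x" by blast
    then show "c *s u \<in> ?W" using gsc[of X A B c] mscale_mv[of c X x] by force
  qed
  have iA: "\<forall>w\<in>?W. A *v w \<in> ?W"
    using gmul[OF gA] by (force simp: matrix_vector_mul_assoc)
  have iB: "\<forall>w\<in>?W. B *v w \<in> ?W"
    using gmul[OF gB] by (force simp: matrix_vector_mul_assoc)
  have "x \<in> ?W" using g1[of A B] by force
  then have "?W \<noteq> {0}" using assms(2) by blast
  then have "?W = UNIV" using irredD[OF assms(1) sub iA iB] by blast
  then have "y \<in> ?W" by simp
  then show ?thesis by blast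
qed



lemma span_family:
  fixes f :: "'i \<Rightarrow> 'f::field^'n"
  assumes "finite I" "y \<in> vec.span (f ` I)"
  shows "\<exists>c. y = (\<Sum>i\<in>I. c i *s f i)"
  using assms(2)
proof (induction rule: vec.span_induct_alt)
  case base
  show ?case by (rule exI[of _ "\<lambda>_. 0"]) simp
next
  case (step a x y)
  then obtain i0 where i0: "i0 \<in> I" "x = f i0" by blast
  from step obtain c where c: "y = (\<Sum>i\<in>I. c i *s f i)" by blast
  have "(\<Sum>i\<in>I. (c i + (if i = i0 then a else 0)) *s f i)
        = (\<Sum>i\<in>I. c i *s f i) + (\<Sum>i\<in>I. (if i = i0 then a else 0) *s f i)"
    by (simp add: vec.scale_left_distrib sum.distrib)
  also have "(\<Sum>i\<in>I. (if i = i0 then a else 0) *s f i) = a *s f i0"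
    using i0 assms(1) by (simp add: if_distrib[of "\<lambda>r. r *s _"] sum.delta' cong: if_cong)
  finally show ?case using c i0 by (metis add.commute)
qed

lemma mv_sum: "(M::'f::field^'n^'m) *v (\<Sum>i\<in>S. f i) = (\<Sum>i\<in>S. M *v f i)"
  by (induction S rule: infinite_finite_induct) (auto simp: matrix_vector_right_distrib)

definition pev :: "'f::field poly \<Rightarrow> 'f^'n^'n \<Rightarrow> 'f^'n \<Rightarrow> 'f^'n" where
  "pev p M v = (\<Sum>i<Suc (degree p). coeff p i *s (((*v) M ^^ i) v))"

lemma pev_upto:
  assumes "degree p < N"
  shows "pev p M v = (\<Sum>i<N. coeff p i *s (((*v) M ^^ i) v))"
  unfolding pev_def
proof (rule sum.mono_neutral_left)
  show "\<forall>i\<in>{..<N} - {..<Suc (degree p)}. coeff p i *s ((*v) M ^^ i) v = 0"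
    by (auto simp: coeff_eq_0)
qed (use assms in auto)

lemma pev_add: "pev (p + q) M v = pev p M v + pev q M v"
proof -
  let ?N = "Suc (max (degree p) (degree q))"
  have "degree (p + q) < ?N" using degree_add_le_max[of p q] by simp
  then show ?thesis
    by (simp add: pev_upto[of _ ?N] vec.scale_left_distrib sum.distrib)
qed

lemma pev_smult: "pev (smult c p) M v = c *s pev p M v"
proof -
  let ?N = "Suc (degree p)"
  have "degree (smult c p) < ?N" by simp
  then show ?thesis
    by (simp add: pev_upto[of _ ?N] vec.scale_sum_right pev_def)
qed

lemma pev_pCons0: "pev (pCons 0 q) M v = M *v pev q M v"
proof -
  let ?N = "Suc (Suc (degree q))"
  have "degree (pCons 0 q) < ?N" by (simp add: degree_pCons_le le_imp_less_Suc)
  then have "pev (pCons 0 q) M v = (\<Sum>i<?N. coeff (pCons 0 q) i *s (((*v) M ^^ i) v))"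
    by (rule pev_upto)
  also have "\<dots> = (\<Sum>i<Suc (degree q). coeff q i *s (((*v) M ^^ Suc i) v))"
    by (simp only: sum.lessThan_Suc_shift) simp
  also have "\<dots> = M *v (\<Sum>i<Suc (degree q). coeff q i *s (((*v) M ^^ i) v))"
    by (simp add: mv_sum mv_scale del: sum.lessThan_Suc)
  finally show ?thesis by (simp add: pev_def)
qed

lemma pev_const: "pev [:c:] M v = c *s v"
  by (simp add: pev_def)

lemma pev_zero: "pev 0 M v = 0"
  by (simp add: pev_def)

lemma pev_sum: "finite S \<Longrightarrow> pev (\<Sum>i\<in>S. f i) M v = (\<Sum>i\<in>S. pev (f i) M v)"
  by (induction S rule: finite_induct) (auto simp: pev_zero pev_add)

lemma pev_monom: "pev (monom a k) M v = a *s (((*v) M ^^ k) v)"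
proof -
  have "degree (monom a k) < Suc k" by (simp add: degree_monom_le le_imp_less_Suc)
  then have "pev (monom a k) M v = (\<Sum>i<Suc k. coeff (monom a k) i *s (((*v) M ^^ i) v))"
    by (rule pev_upto)
  also have "\<dots> = a *s (((*v) M ^^ k) v)"
    by (simp add: coeff_monom if_distrib[of "\<lambda>r. r *s _"] sum.delta cong: if_cong)
  finally show ?thesis .
qed

lemma krylov:
  fixes M :: "'f::field^'n^'n"
  assumes "v \<noteq> 0"
  shows "\<exists>p. p \<noteq> 0 \<and> pev p M v = 0"
proof -
  define f where "f i = ((*v) M ^^ i) v" for i
  have "\<exists>k. f k \<in> vec.span (f ` {..<k})"
  proof (rule ccontr)
    assume "\<not> ?thesis"
    then have nk: "\<And>k. f k \<notin> vec.span (f ` {..<k})" by blast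
    have "vec.dim (f ` {..<k}) = k" for k
    proof (induction k)
      case 0 then show ?case by simp
    next
      case (Suc k)
      have "f ` {..<Suc k} = insert (f k) (f ` {..<k})" by (simp add: lessThan_Suc)
      then show ?case using nk[of k] Suc by (simp add: vec.dim_insert)
    qed
    from this[of "Suc CARD('n)"] dim_subset_UNIV_cart_gen[of "f ` {..<Suc CARD('n)}"]
    show False by simp
  qed
  then obtain k where k: "f k \<in> vec.span (f ` {..<k})" by blast
  then obtain c where c: "f k = (\<Sum>i<k. c i *s f i)"
    using span_family[where I="{..<k}" and f=f] by blast
  define p where "p = monom 1 k - (\<Sum>i<k. monom (c i) i)"
  have "coeff p k = 1" by (simp add: p_def coeff_sum)
  then have "p \<noteq> 0" by auto
  moreover have "pev p M v = 0"
  proof -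
    have e: "p = monom 1 k + smult (-1) (\<Sum>i<k. monom (c i) i)" by (simp add: p_def)
    have "pev (monom 1 k + smult (-1) (\<Sum>i<k. monom (c i) i)) M v = f k + (-1) *s (\<Sum>i<k. c i *s f i)"
      unfolding pev_add pev_smult pev_sum[OF finite_lessThan] pev_monom f_def by simp
    then have "pev p M v = f k + (-1) *s (\<Sum>i<k. c i *s f i)" using e by simp
    then show ?thesis using c by simp
  qed
  ultimately show ?thesis by blast
qed

lemma pev_in:
  assumes "vec.subspace R" "\<forall>w\<in>R. M *v w \<in> R" "v \<in> R"
  shows "pev p M v \<in> R"
proof -
  have "((*v) M ^^ i) v \<in> R" for i
    by (induction i) (use assms in auto)
  then show ?thesis unfolding pev_def
    by (intro vec.subspace_sum[OF assms(1)] vec.subspace_scale[OF assms(1)])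
qed

lemma eigen:
  fixes M :: "'f::field^'n^'n"
  assumes ac: "alg_closed TYPE('f)" and R: "vec.subspace R" "\<forall>w\<in>R. M *v w \<in> R"
    and v: "v \<in> R" "v \<noteq> 0"
  shows "\<exists>l w. w \<in> R \<and> w \<noteq> 0 \<and> M *v w = l *s w"
proof -
  have main: "\<And>p. degree p = n \<Longrightarrow> p \<noteq> 0 \<Longrightarrow> pev p M v = 0 \<Longrightarrow> ?thesis" for n
  proof (induction n rule: less_induct)
    case (less n p)
    show ?case
    proof (cases "degree p = 0")
      case True
      then obtain a where pa: "p = [:a:]" by (metis degree_eq_zeroE)
      then have "a \<noteq> 0" using less(3) by simp
      then have "pev p M v \<noteq> 0" using v(2) pa by (metis pev_const vec.scale_eq_0_iff)
      then show ?thesis using less(4) by simp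
    next
      case False
      then obtain l where "poly p l = 0" using ac unfolding alg_closed_def by force
      then obtain q where pq: "p = [:-l, 1:] * q" by (metis poly_eq_0_iff_dvd dvdE)
      have q0: "q \<noteq> 0" using less(3) pq by auto
      have "degree p = degree [:-l,1:] + degree q" unfolding pq by (rule degree_mult_eq) (use q0 in simp_all)
      then have dq: "degree q < n" using less(2) by simp
      have e: "p = smult (-l) q + pCons 0 q" using pq by simp
      have pe: "pev p M v = (-l) *s pev q M v + M *v pev q M v"
        unfolding e pev_add pev_smult pev_pCons0 ..
      show ?thesis
      proof (cases "pev q M v = 0")
        case True
        then show ?thesis using less(1)[OF dq refl q0] by blast
      next
        case False
        have "M *v pev q M v = l *s pev q M v"
          using pe less(4) by (metis add.commute add_eq_0_iff vec.scale_minus_left)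
        then show ?thesis using False pev_in[OF R v(1)] by blast
      qed
    qed
  qed
  obtain p where "p \<noteq> 0" "pev p M v = 0" using krylov[OF v(2)] by blast
  then show ?thesis using main by blast
qed



lemma dim_image_lt:
  fixes N :: "'f::field^'n^'n"
  assumes R: "vec.subspace R" and w: "w \<in> R" "w \<noteq> 0" "N *v w = 0"
  shows "vec.dim ((*v) N ` R) < vec.dim R"
proof -
  have "vec.independent {w}" using w(2) by (simp add: vec.independent_insert)
  then obtain B where B: "{w} \<subseteq> B" "B \<subseteq> R" "vec.independent B" "R \<subseteq> vec.span B"
    using vec.maximal_independent_subset_extend[of "{w}" R] w(1) by blast
  have fB: "finite B" using B(3) vec.finiteI_independent by blast
  have cB: "card B = vec.dim R" using vec.basis_card_eq_dim[OF B(2) B(4) B(3)] .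
  have "(*v) N ` B \<subseteq> insert 0 ((*v) N ` (B - {w}))" using w(3) by auto
  then have "vec.span ((*v) N ` B) \<subseteq> vec.span ((*v) N ` (B - {w}))"
    by (metis vec.span_insert_0 vec.span_mono)
  moreover have "(*v) N ` R \<subseteq> vec.span ((*v) N ` B)"
    using B(4) by (auto simp: vec.span_image)
  ultimately have "vec.dim ((*v) N ` R) \<le> card ((*v) N ` (B - {w}))"
    using fB by (intro vec.dim_le_card) auto
  also have "\<dots> \<le> card (B - {w})" using fB by (intro card_image_le) auto
  also have "\<dots> < card B" using fB B(1) by (metis card_Diff1_less insert_subset)
  finally show ?thesis using cB by simp
qed

lemma mat_mv: "(mat l :: 'f::field^'n^'n) *v v = l *s v"
  by (simp add: vec_eq_iff mat_def matrix_vector_mult_def if_distrib[of "\<lambda>x. x * _"] cong: if_cong)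

lemma mat1_ne0: "(mat 1 :: 'f::field^'n^'n) \<noteq> 0"
proof -
  obtain i :: 'n where True by blast
  have "(mat 1 :: 'f^'n^'n) $ i $ i = 1" by (simp add: mat_def)
  then show ?thesis by auto
qed

lemma nonzero_mat_vec: "(T::'f::field^'n^'n) \<noteq> 0 \<Longrightarrow> \<exists>x. T *v x \<noteq> 0"
  using matrix_eq[of T 0] by auto

lemma mat_diff_eq: "(M::'f::field^'n^'n) - mat l = M + mscale (-l) (mat 1)"
  by (simp add: mscale_def mat_def vec_eq_iff)

lemma rank_one:
  fixes A B :: "'f::field^'n^'n"
  assumes ac: "alg_closed TYPE('f)" and ir: "irred A B"
  shows "\<exists>T\<in>gen A B. T \<noteq> 0 \<and> vec.dim (range ((*v) T)) \<le> 1"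
proof -
  define P where "P k \<longleftrightarrow> (\<exists>T\<in>gen A B. T \<noteq> 0 \<and> vec.dim (range ((*v) T)) = k)" for k
  have "P (vec.dim (range ((*v) (mat 1 :: 'f^'n^'n))))"
    unfolding P_def using g1 mat1_ne0 by blast
  then have "P (LEAST k. P k)" by (rule LeastI)
  then obtain T where T: "T \<in> gen A B" "T \<noteq> 0" and kT: "vec.dim (range ((*v) T)) = (LEAST k. P k)"
    unfolding P_def by blast
  have minimal: "vec.dim (range ((*v) T)) \<le> vec.dim (range ((*v) T'))"
    if "T' \<in> gen A B" "T' \<noteq> 0" for T'
    using kT Least_le[of P "vec.dim (range ((*v) T'))"] that unfolding P_def by auto
  show ?thesis
  proof (rule ccontr)
    assume "\<not> ?thesis"
    then have big: "vec.dim (range ((*v) T)) > 1" using T by force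
    let ?R = "range ((*v) T)"
    have Rsub: "vec.subspace ?R" using vec.subspace_image[OF vec.subspace_UNIV] .
    obtain x where x: "T *v x \<noteq> 0" using nonzero_mat_vec[OF T(2)] by blast
    have "\<exists>y. T *v y \<notin> vec.span {T *v x}"
    proof (rule ccontr)
      assume "\<not> ?thesis"
      then have "?R \<subseteq> vec.span {T *v x}" by auto
      then have "vec.dim ?R \<le> card {T *v x}" by (intro vec.dim_le_card) auto
      then show False using big by simp
    qed
    then obtain y where y: "T *v y \<notin> vec.span {T *v x}" by blast
    obtain S where S: "S \<in> gen A B" "S *v (T *v x) = y" using step1[OF ir x] by blast
    let ?M = "T ** S"
    have Minv: "\<forall>w\<in>?R. ?M *v w \<in> ?R" by (auto simp: matrix_vector_mul_assoc[symmetric])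
    obtain l w where lw: "w \<in> ?R" "w \<noteq> 0" "?M *v w = l *s w"
      using eigen[OF ac Rsub Minv, of "T *v x"] x by blast
    let ?N = "?M - mat l"
    let ?T' = "?N ** T"
    have T'g: "?T' \<in> gen A B"
      unfolding mat_diff_eq by (intro gmul gadd gsc g1 S T)
    have "?T' *v x = T *v y - l *s (T *v x)"
      using S by (simp add: matrix_vector_mul_assoc[symmetric] matrix_vector_mult_diff_rdistrib
          mat_mv)
    moreover have "T *v y - l *s (T *v x) \<noteq> 0"
    proof
      assume "T *v y - l *s (T *v x) = 0"
      then have "T *v y = l *s (T *v x)" by simp
      then show False using y by (metis vec.span_base vec.span_scale singletonI)
    qed
    ultimately have T'0: "?T' \<noteq> 0" by auto
    have "?N *v w = 0" using lw(3) by (simp add: matrix_vector_mult_diff_rdistrib mat_mv)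
    then have "vec.dim ((*v) ?N ` ?R) < vec.dim ?R" using dim_image_lt[OF Rsub lw(1,2)] by blast
    moreover have "range ((*v) ?T') = (*v) ?N ` ?R"
      by (auto simp: matrix_vector_mul_assoc[symmetric] image_iff)
    ultimately have "vec.dim (range ((*v) ?T')) < vec.dim ?R" by simp
    then show False using minimal[OF T'g T'0] by simp
  qed
qed



abbreviation dotp :: "'f::field^'n \<Rightarrow> 'f^'n \<Rightarrow> 'f" where "dotp \<equiv> scalar_product"

lemma dotp_zero_span:
  assumes "w \<in> vec.span B" "\<forall>b\<in>B. dotp b z = 0"
  shows "dotp w (z::'f::field^'n) = 0"
  using assms(1)
proof (induction rule: vec.span_induct_alt)
  case base then show ?case by (simp add: scalar_product_def)
next
  case (step c x y)
  have "dotp (c *s x + y) z = c * dotp x z + dotp y z"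
    by (simp add: scalar_product_def distrib_right sum.distrib sum_distrib_left mult.assoc)
  then show ?case using step assms(2) by simp
qed

lemma dotp_add: "dotp r (x + y) = dotp r x + dotp r (y::'f::field^'n)"
  by (simp add: scalar_product_def distrib_left sum.distrib)

lemma dotp_scale: "dotp r (c *s x) = c * dotp r (x::'f::field^'n)"
  by (simp add: scalar_product_def sum_distrib_left mult.left_commute)

lemma dotp_zero: "dotp r (0::'f::field^'n) = 0"
  by (simp add: scalar_product_def)

lemma annih_full:
  fixes W :: "('f::field^'n) set"
  assumes W: "vec.subspace W" and an: "\<And>z. (\<forall>w\<in>W. dotp w z = 0) \<Longrightarrow> z = 0"
  shows "W = UNIV"
proof -
  obtain B where B: "B \<subseteq> W" "vec.independent B" "W \<subseteq> vec.span B" "card B = vec.dim W"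
    using vec.basis_exists by blast
  have fB: "finite B" using B(2) vec.finiteI_independent by blast
  have cB: "card B \<le> CARD('n)" using B(4) dim_subset_UNIV_cart_gen[of W] by simp
  obtain xs where xs: "set xs = B" "distinct xs" using finite_distinct_list[OF fB] by blast
  have lxs: "length xs \<le> CARD('n)" using xs cB distinct_card by fastforce
  obtain h :: "'n \<Rightarrow> nat" where h: "bij_betw h UNIV {0..<CARD('n)}"
    using ex_bij_betw_finite_nat[of "UNIV :: 'n set"] by auto
  define R :: "'f^'n^'n" where "R = (\<chi> i. if h i < length xs then xs ! h i else 0)"
  have rowR: "row i R = (if h i < length xs then xs ! h i else 0)" for i
    by (simp add: row_def R_def vec_eq_iff)
  have "rows R \<subseteq> W"
    using B(1) xs(1) vec.subspace_0[OF W] by (auto simp: rows_def rowR)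
  moreover have "\<forall>z. R *v z = 0 \<longrightarrow> z = 0"
  proof (intro allI impI)
    fix z assume Rz: "R *v z = 0"
    have "dotp b z = 0" if "b \<in> B" for b
    proof -
      have "b \<in> set xs" using that xs(1) by simp
      then obtain k where k: "k < length xs" "b = xs ! k" unfolding in_set_conv_nth by blast
      then have "k \<in> {0..<CARD('n)}" using lxs by simp
      then have "k \<in> h ` UNIV" using h by (simp add: bij_betw_def)
      then obtain i where i: "h i = k" by blast
      have "(R *v z) $ i = dotp (R $ i) z"
        by (simp add: matrix_vector_mult_def scalar_product_def)
      moreover have "R $ i = b" using i k by (simp add: R_def)
      ultimately show ?thesis using Rz by simp
    qed
    then have "\<forall>w\<in>W. dotp w z = 0" using B(3) dotp_zero_span by blast
    then show "z = 0" by (rule an)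
  qed
  then have "vec.span (rows R) = UNIV"
    using matrix_left_invertible_ker matrix_left_invertible_span_rows_gen by blast
  ultimately show ?thesis using vec.span_minimal[of "rows R" W] W by auto
qed

lemma dot_vm: "dotp (x v* Q) z = dotp x (Q *v (z::'f::field^'n))"
proof -
  have "dotp (x v* Q) z = (\<Sum>j\<in>UNIV. \<Sum>i\<in>UNIV. x$i * Q$i$j * z$j)"
    by (simp add: scalar_product_def vector_matrix_mult_def sum_distrib_right)
  also have "\<dots> = (\<Sum>i\<in>UNIV. \<Sum>j\<in>UNIV. x$i * Q$i$j * z$j)"
    by (rule sum.swap)
  also have "\<dots> = dotp x (Q *v z)"
    by (simp add: scalar_product_def matrix_vector_mult_def sum_distrib_left mult.assoc)
  finally show ?thesis .
qed

lemma vm_add: "(x::'f::field^'n) v* (P + Q) = x v* P + x v* Q"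
  by (simp add: vec_eq_iff vector_matrix_mult_def distrib_left sum.distrib)

lemma vm_scale: "c *s ((x::'f::field^'n) v* Q) = x v* mscale c Q"
  by (simp add: vec_eq_iff vector_matrix_mult_def mscale_def sum_distrib_left mult.left_commute)

lemma dotp_axis: "dotp (axis k 1) (v::'f::field^'n) = v $ k"
  by (simp add: scalar_product_def axis_def if_distrib[of "\<lambda>x. x * _"] cong: if_cong)

definition elem :: "'n \<Rightarrow> 'n \<Rightarrow> 'f::field^'n^'n" where
  "elem j k = (\<chi> a b. if a = j \<and> b = k then 1 else 0)"

lemma elem_mv: "elem j k *v v = v $ k *s axis j (1::'f::field)"
  by (simp add: vec_eq_iff elem_def matrix_vector_mult_def axis_def if_distrib[of "\<lambda>x. x * _"] cong: if_cong)

lemma dsum_aux: "(\<Sum>x\<in>UNIV. \<Sum>xa\<in>UNIV. if i = x \<and> ia = xa then (f::'n::finite\<Rightarrow>'n\<Rightarrow>'f) x xa else (0::'f::field)) = f i ia"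
proof -
  have "\<And>x. (\<Sum>xa\<in>UNIV. if i = x \<and> ia = xa then f x xa else 0) = (if i = x then f x ia else 0)"
    by (case_tac "i = x") (simp_all add: sum.delta')
  then show ?thesis by simp
qed

lemma elem_decomp: "(X::'f::field^'n^'n) = (\<Sum>j\<in>UNIV. \<Sum>k\<in>UNIV. mscale (X$j$k) (elem j k))"
  by (simp add: vec_eq_iff sum_component mscale_def elem_def if_distrib[of "\<lambda>x. _ * x"] dsum_aux cong: if_cong)

lemma burnside:
  fixes A B :: "'f::field^'n^'n"
  assumes ac: "alg_closed TYPE('f)" and ir: "irred A B"
  shows "gen A B = UNIV"
proof -
  obtain T where T: "T \<in> gen A B" "T \<noteq> 0" "vec.dim (range ((*v) T)) \<le> 1"
    using rank_one[OF ac ir] by blast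
  obtain v0 where v0: "T *v v0 \<noteq> 0" using nonzero_mat_vec[OF T(2)] by blast
  define u where "u = T *v v0"
  have u0: "u \<noteq> 0" using v0 u_def by simp
  have rng: "T *v v \<in> vec.span {u}" for v
  proof (rule ccontr)
    assume nv: "T *v v \<notin> vec.span {u}"
    then have "T *v v \<noteq> u" using vec.span_base by blast
    then have "vec.independent {T *v v, u}"
      using nv u0 by (simp add: vec.independent_insert)
    moreover have "{T *v v, u} \<subseteq> range ((*v) T)" using u_def by auto
    ultimately have "card {T *v v, u} \<le> vec.dim (range ((*v) T))"
      by (intro vec.independent_card_le_dim)
    then show False using T(3) \<open>T *v v \<noteq> u\<close> by simp
  qed
  obtain i0 where i0: "u $ i0 \<noteq> 0" using u0 by (metis vec_eq_iff zero_index)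
  define r :: "'f^'n" where "r = (\<chi> j. T $ i0 $ j / u $ i0)"
  have phi: "T *v v = dotp r v *s u" for v
  proof -
    obtain c where c: "T *v v = c *s u" using rng[of v] by (auto simp: vec.span_singleton)
    have "dotp r v = (T *v v) $ i0 / u $ i0"
      by (simp add: r_def scalar_product_def matrix_vector_mult_def sum_divide_distrib
          mult.commute)
    also have "\<dots> = c" using c i0 by simp
    finally show ?thesis using c by simp
  qed
  have r1: "dotp r v0 = 1"
  proof -
    have "u = dotp r v0 *s u" using phi[of v0] u_def by simp
    then have "(dotp r v0 - 1) *s u = 0" by (simp add: vec.scale_left_diff_distrib)
    then have "dotp r v0 - 1 = 0" using u0 by (metis vec.scale_eq_0_iff)
    then show ?thesis by simp
  qed
  let ?W = "{r v* Q | Q. Q \<in> gen A B}"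
  have Wsub: "vec.subspace ?W"
    unfolding vec.subspace_def
  proof (intro conjI ballI allI)
    show "0 \<in> ?W" using g0[of A B] by (force simp: vector_matrix_mult_def vec_eq_iff)
    fix x y assume "x \<in> ?W" "y \<in> ?W"
    then obtain P Q where "P \<in> gen A B" "Q \<in> gen A B" "x = r v* P" "y = r v* Q" by blast
    then have "x + y = r v* (P + Q)" "P + Q \<in> gen A B" using gadd[of P A B Q] vm_add[of r P Q] by auto
    then show "x + y \<in> ?W" by blast
  next
    fix c x assume "x \<in> ?W"
    then obtain Q where "Q \<in> gen A B" "x = r v* Q" by blast
    then have "c *s x = r v* mscale c Q" "mscale c Q \<in> gen A B" using gsc[of Q A B c] vm_scale[of c r Q] by auto
    then show "c *s x \<in> ?W" by blast
  qed
  have "?W = UNIV"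
  proof (rule annih_full[OF Wsub])
    fix z assume zW: "\<forall>w\<in>?W. dotp w z = 0"
    let ?Z = "{z. \<forall>Q\<in>gen A B. dotp r (Q *v z) = 0}"
    have Zsub: "vec.subspace ?Z"
      unfolding vec.subspace_def
      by (auto simp: matrix_vector_right_distrib mv_scale dotp_add dotp_scale dotp_zero)
    have iA: "\<forall>w\<in>?Z. A *v w \<in> ?Z"
      using gmul[OF _ gA] by (auto simp: matrix_vector_mul_assoc)
    have iB: "\<forall>w\<in>?Z. B *v w \<in> ?Z"
      using gmul[OF _ gB] by (auto simp: matrix_vector_mul_assoc)
    have "dotp r (mat 1 *v v0) \<noteq> 0" using r1 by simp
    then have "v0 \<notin> ?Z" using g1[of A B] by blast
    then have "?Z = {0}" using irredD[OF ir Zsub iA iB] by blast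
    moreover have "z \<in> ?Z"
    proof (intro CollectI ballI)
      fix Q assume "Q \<in> gen A B"
      then have "r v* Q \<in> ?W" by blast
      then have "dotp (r v* Q) z = 0" using zW by blast
      then show "dotp r (Q *v z) = 0" by (simp add: dot_vm)
    qed
    ultimately show "z = 0" by blast
  qed
  have E: "elem j k \<in> gen A B" for j k
  proof -
    have "axis k 1 \<in> ?W" using \<open>?W = UNIV\<close> by simp
    then obtain Q where Q0: "Q \<in> gen A B" "axis k 1 = r v* Q" by blast
    then have Q: "Q \<in> gen A B" "r v* Q = axis k 1" by simp_all
    obtain P where P: "P \<in> gen A B" "P *v u = axis j 1" using step1[OF ir u0] by blast
    have "(P ** T ** Q) *v v = elem j k *v v" for v
    proof -
      have "(P ** T ** Q) *v v = P *v (T *v (Q *v v))"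
        by (simp add: matrix_vector_mul_assoc matrix_mul_assoc)
      also have "\<dots> = dotp r (Q *v v) *s axis j 1" using phi P by (simp add: mv_scale)
      also have "dotp r (Q *v v) = dotp (r v* Q) v" by (rule dot_vm[symmetric])
      also have "\<dots> = v $ k" using Q(2) dotp_axis by simp
      finally show ?thesis by (simp add: elem_mv)
    qed
    then have "P ** T ** Q = elem j k" by (simp add: matrix_eq)
    then show ?thesis using gmul[OF gmul[OF P(1) T(1)] Q(1)] by simp
  qed
  show ?thesis
  proof (intro set_eqI iffI)
    fix X :: "'f^'n^'n"
    have "(\<Sum>j\<in>UNIV. \<Sum>k\<in>UNIV. mscale (X$j$k) (elem j k)) \<in> gen A B"
      by (intro gsum gsc E) auto
    then show "X \<in> gen A B" using elem_decomp[of X] by simp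
  qed auto
qed



theorem theorem10p2:
  fixes A As :: "'f::field_char_0^'n^'n"
    and b :: "'f^'n \<Rightarrow> 'f^'n \<Rightarrow> 'f"
    and dag :: "'f^'n^'n \<Rightarrow> 'f^'n^'n"
  assumes "alg_closed TYPE('f)"
    and "TD_pair A As"
    and "krawtchouk_type A As"
    and "bilinear_form b"
    and "\<exists>u v. b u v \<noteq> 0"
    and "\<forall>u v. b (A *v u) v = b u (A *v v)"
    and "\<forall>u v. b (As *v u) v = b u (As *v v)"
    and "\<forall>X u v. b (X *v u) v = b u (dag X *v v)"
  shows "antiautomorphism dag \<and> dag A = A \<and> dag As = As \<and>
         (\<forall>g. antiautomorphism g \<and> g A = A \<and> g As = As \<longrightarrow> g = dag) \<and>
         (\<forall>X. dag (dag X) = X)"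
proof -
  note ac = assms(1)
  have ir: "irred A As" using assms(2) unfolding TD_pair_def irred_def by blast
  have ba: "b (x + y) z = b x z + b y z" "b (c *s x) z = c * b x z"
       "b x (y + z) = b x y + b x z" "b x (c *s z) = c * b x z" for x y z c
    using assms(4) unfolding bilinear_form_def by blast+
  note symA = assms(6)[rule_format] and symAs = assms(7)[rule_format]
  note adj = assms(8)[rule_format]
  have b0l: "b 0 v = 0" for v using ba(1)[of 0 0 v] by simp
  have b0r: "b u 0 = 0" for u using ba(3)[of u 0 0] by simp
  have bdr: "b x (y - z) = b x y - b x z" for x y z
    using ba(3)[of x "y - z" z] by simp
  have rnd: "v = 0" if "\<forall>u. b u v = 0" for v
  proof -
    let ?R = "{v. \<forall>u. b u v = 0}"
    have sub: "vec.subspace ?R" unfolding vec.subspace_def by (auto simp: ba b0r)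
    have iA: "\<forall>w\<in>?R. A *v w \<in> ?R" by (auto simp: symA[symmetric])
    have iB: "\<forall>w\<in>?R. As *v w \<in> ?R" by (auto simp: symAs[symmetric])
    have "?R \<noteq> UNIV" using assms(5) by auto
    then have "?R = {0}" using irredD[OF ir sub iA iB] by blast
    then show ?thesis using that by blast
  qed
  have eqR: "y = z" if "\<And>u. b u y = b u z" for y z
  proof -
    have "\<forall>u. b u (y - z) = 0" using that by (simp add: bdr)
    then show ?thesis using rnd by force
  qed
  have mext: "Y = Z" if "\<And>u v. b u (Y *v v) = b u (Z *v v)" for Y Z
    using that eqR by (metis matrix_eq)
  note adjr = adj[symmetric]
  have dadd: "dag (X + Y) = dag X + dag Y" for X Y
    by (rule mext) (simp add: adjr matrix_vector_mult_add_rdistrib ba)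
  have dsc: "dag (mscale c X) = mscale c (dag X)" for c X
    by (rule mext) (simp add: adjr mscale_mv ba)
  have dmul: "dag (X ** Y) = dag Y ** dag X" for X Y
    by (rule mext) (simp add: adjr matrix_vector_mul_assoc[symmetric])
  have dA: "dag A = A" by (rule mext) (simp add: adjr symA)
  have dAs: "dag As = As" by (rule mext) (simp add: adjr symAs)
  have d1: "dag (mat 1) = mat 1" by (rule mext) (simp add: adjr)
  have G: "gen A As = UNIV" by (rule burnside[OF ac ir])
  have "dag (dag X) = X" if "X \<in> gen A As" for X
    using that by (induction rule: gen.induct) (simp_all add: dA dAs d1 dadd dmul dsc)
  then have dd: "\<forall>X. dag (dag X) = X" using G by blast
  have bij: "bij dag"
    by (metis bijI dd injI surjI)
  have anti: "antiautomorphism dag"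
    unfolding antiautomorphism_def using dadd dsc bij dmul by blast
  have uniq: "g = dag" if g: "antiautomorphism g" "g A = A" "g As = As" for g
  proof -
    have gadd: "g (X + Y) = g X + g Y" and gsc: "g (mscale c X) = mscale c (g X)"
      and gmul: "g (X ** Y) = g Y ** g X" and gb: "bij g" for X Y c
      using g(1) unfolding antiautomorphism_def by blast+
    have r1: "g X ** g (mat 1) = g X" for X
      using gmul[of "mat 1" X] by (simp add: matrix_mul_lid)
    obtain X where "g X = mat 1" using gb by (metis bij_pointE)
    then have g1: "g (mat 1) = mat 1" using r1[of X] by (simp add: matrix_mul_lid)
    have "g X = dag X" if "X \<in> gen A As" for X
      using that by (induction rule: gen.induct)
        (simp_all add: g(2,3) dA dAs d1 g1 gadd dadd gmul dmul gsc dsc)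
    then show ?thesis using G by blast
  qed
  show ?thesis using anti dA dAs uniq dd by blast
qed

end
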